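(* Let $C_t\subseteq\mathbb{R}^d$, $t=1,2,\dots$, be closed convex sets and $\ell_t:\mathbb{R}^d\to\mathbb{R}$ convex losses, with $g_t$ a subgradient selection of $\ell_t$ used by the algorithm. Suppose that for each $t$: $\ell_t$ is $L$-Lipschitz, $\ell_t$ is $(h_t,0)$-restorative, and the pair $(\ell_t,C_t)$ satisfies inward flow. Then the hidden iterates of lazy gradient descent with learning rate $\eta>0$ satisfy, for every $T\ge1$, $$\|\tilde\theta_{T+1}\|_2\le\sqrt{\|\tilde\theta_1\|_2^2+\eta^2L^2T+2\eta L\sum_{t=1}^T h_t}.$$ If moreover $(h_t)$ is nondecreasing, then $$\Bigg\|\frac1T\sum_{t=1}^T g_t(\theta_t)\Bigg\|_2\le\frac{2\|\tilde\theta_1\|_2}{\eta T}+\sqrt{\frac{L^2}{T}+\frac{2Lh_T}{\eta T}},$$ which tends to $0$ as $T\to\infty$ whenever $h_t$ is sublinear in $t$.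
   Context: Lazy gradient descent: given $\tilde\theta_1\in C_1$ and $\eta>0$, for $t=1,2,\dots$ set $\theta_t=\Pi_{C_t}(\tilde\theta_t)$ (Euclidean projection) and $\tilde\theta_{t+1}=\tilde\theta_t-\eta g_t(\theta_t)$. A loss $\ell$ is $L$-Lipschitz if all its subgradients $g$ satisfy $\|g(\theta)\|_2\le L$ for all $\theta$. For $h\ge0$ and a nonnegative function $\phi$, $\ell$ is $(h,\phi)$-restorative if all its subgradients $g$ satisfy $\langle\theta,g(\theta)\rangle\ge\phi(\theta)$ whenever $\|\theta\|_2>h$. A pair $(\ell,C)$ with $C$ closed convex and $g$ the (sub)gradient of $\ell$ satisfies inward flow if $-g(\theta)\in T_C(\theta)$ for all $\theta$ on the boundary of $C$, where $T_C(x)=\mathrm{cl}\{y:\exists\beta>0\text{ with }x+\varepsilon y\in C\ \forall\varepsilon\in[0,\beta]\}$ is the tangent cone. *)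

theory Defs
  imports "HOL-Analysis.Analysis"
begin

definition is_subgradient :: "('a::euclidean_space \<Rightarrow> real) \<Rightarrow> 'a \<Rightarrow> 'a \<Rightarrow> bool" where
  "is_subgradient l x v \<longleftrightarrow> (\<forall>y. l y \<ge> l x + inner v (y - x))"

definition lipschitz_loss :: "real \<Rightarrow> ('a::euclidean_space \<Rightarrow> real) \<Rightarrow> bool" where
  "lipschitz_loss L l \<longleftrightarrow> (\<forall>x v. is_subgradient l x v \<longrightarrow> norm v \<le> L)"

definition restorative :: "real \<Rightarrow> ('a::euclidean_space \<Rightarrow> real) \<Rightarrow> ('a \<Rightarrow> real) \<Rightarrow> bool" where
  "restorative h phi l \<longleftrightarrow> h \<ge> 0 \<and> (\<forall>x. phi x \<ge> 0) \<and>
     (\<forall>x v. is_subgradient l x v \<longrightarrow> norm x > h \<longrightarrow> inner x v \<ge> phi x)"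

definition tangent_cone :: "'a::euclidean_space set \<Rightarrow> 'a \<Rightarrow> 'a set" where
  "tangent_cone C x = closure {y. \<exists>\<beta>>0. \<forall>\<epsilon>\<in>{0..\<beta>}. x + \<epsilon> *\<^sub>R y \<in> C}"

text \<open>Inward flow for the pair (l, C), with g the (sub)gradient (selection) of l.\<close>
definition inward_flow :: "('a::euclidean_space \<Rightarrow> 'a) \<Rightarrow> 'a set \<Rightarrow> bool" where
  "inward_flow g C \<longleftrightarrow> (\<forall>x\<in>frontier C. - g x \<in> tangent_cone C x)"

end

theory Submission
  imports Defs
begin

lemma l1_aux: "(c::real) \<ge> 0 \<Longrightarrow> x \<ge> - y \<Longrightarrow> - c * x \<le> c * y"
  by (metis minus_le_iff minus_mult_commute ordered_comm_semiring_class.comm_mult_left_mono)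

lemma step_bound: "(N::real) = A + e\<^sup>2 * G - 2 * (e * X) \<Longrightarrow> G \<le> L\<^sup>2 \<Longrightarrow> e > 0 \<Longrightarrow> X \<ge> - (L * h) \<Longrightarrow> N \<le> A + e\<^sup>2 * L\<^sup>2 + 2 * e * L * h"
proof -
  assume a: "N = A + e\<^sup>2 * G - 2 * (e * X)" "G \<le> L\<^sup>2" "e > 0" "X \<ge> - (L * h)"
  have 1: "e\<^sup>2 * G \<le> e\<^sup>2 * L\<^sup>2" using a by (intro mult_left_mono) auto
  have 2: "- (2 * e) * X \<le> (2 * e) * (L * h)" using a by (intro l1_aux) auto
  have 3: "- (2 * e) * X = - (2 * (e * X))" "(2 * e) * (L * h) = 2 * e * L * h" by simp_all
  show ?thesis using a(1) 1 2 3 by linarith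
qed

lemma cp_frontier:
  fixes C :: "'a::euclidean_space set"
  assumes "closed C" "convex C" "C \<noteq> {}" "x \<notin> C"
  shows "closest_point C x \<in> frontier C"
proof -
  let ?p = "closest_point C x"
  have pC: "?p \<in> C" using closest_point_in_set assms by blast
  have ne: "x \<noteq> ?p" using pC assms by auto
  have "?p \<notin> interior C"
  proof
    assume "?p \<in> interior C"
    then obtain e where e: "e > 0" "ball ?p e \<subseteq> C" using mem_interior by blast
    define d where "d = e / (2 * norm (x - ?p))"
    have np: "norm (x - ?p) > 0" using ne by simp
    have d: "d > 0" using e np by (simp add: d_def)
    have "dist ?p (?p + d *\<^sub>R (x - ?p)) = d * norm (x - ?p)" using d by (simp add: dist_norm)
    also have "\<dots> = e/2" using np by (simp add: d_def)
    finally have "?p + d *\<^sub>R (x - ?p) \<in> C" using e by auto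
    from closest_point_dot[OF assms(2,1) this, of x]
    have "inner (x - ?p) (d *\<^sub>R (x - ?p)) \<le> 0" by simp
    hence "d * (norm (x - ?p))\<^sup>2 \<le> 0" by (simp add: power2_norm_eq_inner)
    with d np show False by (simp add: mult_le_0_iff)
  qed
  thus ?thesis using pC assms(1) by (simp add: frontier_def)
qed

lemma normal_tangent:
  fixes C :: "'a::euclidean_space set"
  assumes "closed C" "convex C" "C \<noteq> {}" "y \<in> tangent_cone C (closest_point C x)"
  shows "inner (x - closest_point C x) y \<le> 0"
proof -
  let ?p = "closest_point C x"
  have "{y. \<exists>\<beta>>0. \<forall>\<epsilon>\<in>{0..\<beta>}. ?p + \<epsilon> *\<^sub>R y \<in> C} \<subseteq> {y. inner (x - ?p) y \<le> 0}"
  proof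
    fix y assume "y \<in> {y. \<exists>\<beta>>0. \<forall>\<epsilon>\<in>{0..\<beta>}. ?p + \<epsilon> *\<^sub>R y \<in> C}"
    then obtain b where b: "b > 0" "?p + b *\<^sub>R y \<in> C" by auto
    from closest_point_dot[OF assms(2,1) b(2), of x]
    have "b * inner (x - ?p) y \<le> 0" by simp
    with b show "y \<in> {y. inner (x - ?p) y \<le> 0}" by (simp add: mult_le_0_iff)
  qed
  moreover have "closed {y. inner (x - ?p) y \<le> 0}"
    using closed_halfspace_le[of "x - ?p" 0] by simp
  ultimately have "tangent_cone C ?p \<subseteq> {y. inner (x - ?p) y \<le> 0}"
    unfolding tangent_cone_def by (rule closure_minimal)
  with assms(4) show ?thesis by auto
qed

theorem proposition5:
  fixes C :: "nat \<Rightarrow> 'a::euclidean_space set"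
    and l :: "nat \<Rightarrow> 'a \<Rightarrow> real"
    and g :: "nat \<Rightarrow> 'a \<Rightarrow> 'a"
    and h :: "nat \<Rightarrow> real"
    and L \<eta> :: real
    and \<theta> \<theta>h :: "nat \<Rightarrow> 'a"
  assumes closedC: "\<And>t. t \<ge> 1 \<Longrightarrow> closed (C t)"
    and convexC: "\<And>t. t \<ge> 1 \<Longrightarrow> convex (C t)"
    and nonemptyC: "\<And>t. t \<ge> 1 \<Longrightarrow> C t \<noteq> {}"
    and convex_loss: "\<And>t. t \<ge> 1 \<Longrightarrow> convex_on UNIV (l t)"
    and subgrad: "\<And>t x. t \<ge> 1 \<Longrightarrow> is_subgradient (l t) x (g t x)"
    and lip: "\<And>t. t \<ge> 1 \<Longrightarrow> lipschitz_loss L (l t)"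
    and rest: "\<And>t. t \<ge> 1 \<Longrightarrow> restorative (h t) (\<lambda>_. 0) (l t)"
    and inward: "\<And>t. t \<ge> 1 \<Longrightarrow> inward_flow (g t) (C t)"
    and eta: "\<eta> > 0"
    and init: "\<theta>h 1 \<in> C 1"
    and proj: "\<And>t. t \<ge> 1 \<Longrightarrow> \<theta> t = closest_point (C t) (\<theta>h t)"
    and step: "\<And>t. t \<ge> 1 \<Longrightarrow> \<theta>h (Suc t) = \<theta>h t - \<eta> *\<^sub>R g t (\<theta> t)"
  shows "(\<forall>T\<ge>1. norm (\<theta>h (T + 1)) \<le>
            sqrt ((norm (\<theta>h 1))\<^sup>2 + \<eta>\<^sup>2 * L\<^sup>2 * real T + 2 * \<eta> * L * (\<Sum>t=1..T. h t)))
       \<and> ((\<forall>s t. 1 \<le> s \<longrightarrow> s \<le> t \<longrightarrow> h s \<le> h t) \<longrightarrow>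
            (\<forall>T\<ge>1. norm ((1 / real T) *\<^sub>R (\<Sum>t=1..T. g t (\<theta> t))) \<le>
               2 * norm (\<theta>h 1) / (\<eta> * real T)
               + sqrt (L\<^sup>2 / real T + 2 * L * h T / (\<eta> * real T)))
          \<and> (((\<lambda>T. h T / real T) \<longlonglongrightarrow> 0) \<longrightarrow>
             ((\<lambda>T. 2 * norm (\<theta>h 1) / (\<eta> * real T)
               + sqrt (L\<^sup>2 / real T + 2 * L * h T / (\<eta> * real T))) \<longlonglongrightarrow> 0)))"
  proof -
  have gL: "norm (g t x) \<le> L" if "t \<ge> 1" for t x
    using lip[OF that] subgrad[OF that] unfolding lipschitz_loss_def by blast
  have L0: "L \<ge> 0" using gL[of 1 undefined] norm_ge_zero[of "g 1 undefined"] by linarith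
  have h0: "h t \<ge> 0" if "t \<ge> 1" for t using rest[OF that] unfolding restorative_def by blast
  have key: "inner (\<theta>h t) (g t (\<theta> t)) \<ge> - (L * h t)" if t: "t \<ge> 1" for t
  proof -
    let ?g = "g t (\<theta> t)"
    have A: "inner (\<theta>h t - \<theta> t) ?g \<ge> 0"
    proof (cases "\<theta>h t \<in> C t")
      case True
      then show ?thesis using proj[OF t] closest_point_self[OF True] by simp
    next
      case False
      have fr: "\<theta> t \<in> frontier (C t)"
        using cp_frontier[OF closedC[OF t] convexC[OF t] nonemptyC[OF t] False] proj[OF t] by simp
      hence "- ?g \<in> tangent_cone (C t) (closest_point (C t) (\<theta>h t))"
        using inward[OF t] proj[OF t] unfolding inward_flow_def by auto
      from normal_tangent[OF closedC[OF t] convexC[OF t] nonemptyC[OF t] this]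
      show ?thesis using proj[OF t] by (simp add: inner_minus_right)
    qed
    have B: "inner (\<theta> t) ?g \<ge> - (L * h t)"
    proof (cases "norm (\<theta> t) > h t")
      case True
      hence "inner (\<theta> t) ?g \<ge> 0" using rest[OF t] subgrad[OF t] unfolding restorative_def by blast
      moreover have "L * h t \<ge> 0" using L0 h0[OF t] by simp
      ultimately show ?thesis by linarith
    next
      case False
      have "\<bar>inner (\<theta> t) ?g\<bar> \<le> norm (\<theta> t) * norm ?g" by (rule Cauchy_Schwarz_ineq2)
      also have "\<dots> \<le> h t * L" using False gL[OF t] h0[OF t] by (intro mult_mono) auto
      finally show ?thesis by (simp add: mult.commute)
    qed
    have "inner (\<theta>h t) ?g = inner (\<theta>h t - \<theta> t) ?g + inner (\<theta> t) ?g"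
      by (simp add: inner_diff_left)
    with A B show ?thesis by linarith
  qed
  have stepsq: "(norm (\<theta>h (Suc t)))\<^sup>2 \<le> (norm (\<theta>h t))\<^sup>2 + \<eta>\<^sup>2 * L\<^sup>2 + 2 * \<eta> * L * h t"
    if t: "t \<ge> 1" for t
  proof -
    let ?g = "g t (\<theta> t)"
    have d: "inner (\<theta>h t) (\<eta> *\<^sub>R ?g) = ((norm (\<theta>h t))\<^sup>2 + (norm (\<eta> *\<^sub>R ?g))\<^sup>2 - (norm (\<theta>h t - \<eta> *\<^sub>R ?g))\<^sup>2) / 2"
      by (rule dot_norm_neg)
    have e: "(norm (\<eta> *\<^sub>R ?g))\<^sup>2 = \<eta>\<^sup>2 * (norm ?g)\<^sup>2" using eta by (simp add: power_mult_distrib)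
    have f: "inner (\<theta>h t) (\<eta> *\<^sub>R ?g) = \<eta> * inner (\<theta>h t) ?g" by simp
    have aux: "(x::real) = (a + b - n) / 2 \<Longrightarrow> n = a + b - 2 * x" for x a b n by (simp add: field_simps)
    have "(norm (\<theta>h t - \<eta> *\<^sub>R ?g))\<^sup>2 = (norm (\<theta>h t))\<^sup>2 + \<eta>\<^sup>2 * (norm ?g)\<^sup>2 - 2 * (\<eta> * inner (\<theta>h t) ?g)"
      using aux[OF d] unfolding e f .
    moreover have "(norm ?g)\<^sup>2 \<le> L\<^sup>2" using gL[OF t] by (simp add: power_mono)
    ultimately show ?thesis unfolding step[OF t] using eta key[OF t] by (rule step_bound)
  qed
  have sq: "(norm (\<theta>h (T + 1)))\<^sup>2 \<le>
      (norm (\<theta>h 1))\<^sup>2 + \<eta>\<^sup>2 * L\<^sup>2 * real T + 2 * \<eta> * L * (\<Sum>t=1..T. h t)" for T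
  proof (induction T)
    case 0 then show ?case by simp
  next
    case (Suc T)
    have "(norm (\<theta>h (Suc T + 1)))\<^sup>2 \<le> (norm (\<theta>h (Suc T)))\<^sup>2 + \<eta>\<^sup>2 * L\<^sup>2 + 2 * \<eta> * L * h (Suc T)"
      using stepsq[of "Suc T"] by simp
    with Suc show ?case by (simp add: algebra_simps)
  qed
  have P1: "norm (\<theta>h (T + 1)) \<le>
      sqrt ((norm (\<theta>h 1))\<^sup>2 + \<eta>\<^sup>2 * L\<^sup>2 * real T + 2 * \<eta> * L * (\<Sum>t=1..T. h t))" for T
    using sq[of T] by (rule real_le_rsqrt)
  have sumg: "\<eta> *\<^sub>R (\<Sum>t=1..T. g t (\<theta> t)) = \<theta>h 1 - \<theta>h (T + 1)" for T
  proof (induction T)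
    case 0 then show ?case by simp
  next
    case (Suc T)
    have st: "\<eta> *\<^sub>R g (Suc T) (\<theta> (Suc T)) = \<theta>h (Suc T) - \<theta>h (Suc (Suc T))"
      using step[of "Suc T"] by simp
    have "\<eta> *\<^sub>R (\<Sum>t=1..Suc T. g t (\<theta> t)) = \<eta> *\<^sub>R (\<Sum>t=1..T. g t (\<theta> t)) + \<eta> *\<^sub>R g (Suc T) (\<theta> (Suc T))"
      by (simp add: scaleR_add_right)
    also have "\<dots> = (\<theta>h 1 - \<theta>h (T + 1)) + (\<theta>h (Suc T) - \<theta>h (Suc (Suc T)))"
      using Suc.IH st by simp
    also have "\<dots> = \<theta>h 1 - \<theta>h (Suc T + 1)" by simp
    finally show ?case .
  qed
  have P2: "norm ((1 / real T) *\<^sub>R (\<Sum>t=1..T. g t (\<theta> t))) \<le>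
               2 * norm (\<theta>h 1) / (\<eta> * real T)
               + sqrt (L\<^sup>2 / real T + 2 * L * h T / (\<eta> * real T))"
    if mono: "\<forall>s t. 1 \<le> s \<longrightarrow> s \<le> t \<longrightarrow> h s \<le> h t" and T: "T \<ge> 1" for T
  proof -
    define a where "a = norm (\<theta>h 1)"
    define B where "B = \<eta>\<^sup>2 * L\<^sup>2 * real T + 2 * \<eta> * L * (real T * h T)"
    have Tp: "real T > 0" using T by simp
    have sh: "(\<Sum>t=1..T. h t) \<le> real T * h T"
      using sum_bounded_above[of "{1..T}" h "h T"] mono by auto
    have B0: "B \<ge> 0" unfolding B_def using eta L0 h0[OF T] by simp
    have "norm (\<theta>h (T + 1)) \<le> sqrt (a\<^sup>2 + B)"
    proof -
      have "2 * \<eta> * L * (\<Sum>t=1..T. h t) \<le> 2 * \<eta> * L * (real T * h T)"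
        using sh eta L0 by (intro mult_left_mono) auto
      hence "(norm (\<theta>h 1))\<^sup>2 + \<eta>\<^sup>2 * L\<^sup>2 * real T + 2 * \<eta> * L * (\<Sum>t=1..T. h t) \<le> a\<^sup>2 + B"
        unfolding a_def B_def by linarith
      hence "sqrt ((norm (\<theta>h 1))\<^sup>2 + \<eta>\<^sup>2 * L\<^sup>2 * real T + 2 * \<eta> * L * (\<Sum>t=1..T. h t)) \<le> sqrt (a\<^sup>2 + B)"
        by (rule real_sqrt_le_mono)
      then show ?thesis using P1[of T] by linarith
    qed
    also have "\<dots> \<le> sqrt (a\<^sup>2) + sqrt B" by (rule sqrt_add_le_add_sqrt) (auto simp: B0)
    also have "\<dots> = a + sqrt B" by (simp add: a_def)
    finally have nT: "norm (\<theta>h (T + 1)) \<le> a + sqrt B" .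
    have "(1 / real T) *\<^sub>R (\<Sum>t=1..T. g t (\<theta> t)) = (1 / (\<eta> * real T)) *\<^sub>R (\<theta>h 1 - \<theta>h (T + 1))"
    proof -
      have "(1 / (\<eta> * real T)) *\<^sub>R (\<theta>h 1 - \<theta>h (T + 1)) = (1 / (\<eta> * real T)) *\<^sub>R (\<eta> *\<^sub>R (\<Sum>t=1..T. g t (\<theta> t)))"
        using sumg[of T] by simp
      also have "\<dots> = ((1 / (\<eta> * real T)) * \<eta>) *\<^sub>R (\<Sum>t=1..T. g t (\<theta> t))" by simp
      also have "(1 / (\<eta> * real T)) * \<eta> = 1 / real T" using eta by simp
      finally show ?thesis by simp
    qed
    hence "norm ((1 / real T) *\<^sub>R (\<Sum>t=1..T. g t (\<theta> t))) = norm (\<theta>h 1 - \<theta>h (T + 1)) / (\<eta> * real T)"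
      using eta Tp by simp
    also have "\<dots> \<le> (a + (a + sqrt B)) / (\<eta> * real T)"
      using norm_triangle_ineq4[of "\<theta>h 1" "\<theta>h (T+1)"] nT eta Tp unfolding a_def
      by (intro divide_right_mono) auto
    also have "\<dots> = 2 * a / (\<eta> * real T) + sqrt B / (\<eta> * real T)" by (simp add: add_divide_distrib)
    also have "sqrt B / (\<eta> * real T) = sqrt (B / (\<eta> * real T)\<^sup>2)"
      using eta Tp by (simp add: real_sqrt_divide)
    also have "B / (\<eta> * real T)\<^sup>2 = L\<^sup>2 / real T + 2 * L * h T / (\<eta> * real T)"
      unfolding B_def using eta Tp by (simp add: field_simps power2_eq_square)
    finally show ?thesis unfolding a_def .
  qed
  have P3: "(\<lambda>T. 2 * norm (\<theta>h 1) / (\<eta> * real T)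
               + sqrt (L\<^sup>2 / real T + 2 * L * h T / (\<eta> * real T))) \<longlonglongrightarrow> 0"
    if lim: "(\<lambda>T. h T / real T) \<longlonglongrightarrow> 0"
  proof -
    have e1: "(\<lambda>T. 2 * norm (\<theta>h 1) / (\<eta> * real T)) = (\<lambda>T. (2 * norm (\<theta>h 1) / \<eta>) / real T)"
      by simp
    have e2: "(\<lambda>T. L\<^sup>2 / real T + 2 * L * h T / (\<eta> * real T)) = (\<lambda>T. L\<^sup>2 / real T + (2 * L / \<eta>) * (h T / real T))"
      by simp
    have "(\<lambda>T. L\<^sup>2 / real T + (2 * L / \<eta>) * (h T / real T)) \<longlonglongrightarrow> 0 + (2 * L / \<eta>) * 0"
      by (intro tendsto_intros lim_const_over_n lim)
    hence "(\<lambda>T. sqrt (L\<^sup>2 / real T + 2 * L * h T / (\<eta> * real T))) \<longlonglongrightarrow> sqrt 0"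
      unfolding e2 by (intro tendsto_real_sqrt) simp
    moreover have "(\<lambda>T. 2 * norm (\<theta>h 1) / (\<eta> * real T)) \<longlonglongrightarrow> 0"
      unfolding e1 by (rule lim_const_over_n)
    ultimately show ?thesis using tendsto_add[of _ 0 _ _ 0] by fastforce
  qed
  show ?thesis using P1 P2 P3 by blast
qed

end
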